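(* Assume $k=2$, and write $y=y_1$. (1) $r=e-1$ if and only if one of the following holds: (a) $2y\ge c+e$; (b) $2y=(2q+1)e<c+e$ for some integer $q\ge1$, $p\ge2$, and $y\in v(xR:\mathfrak m)$. (2) $r=e-2$ if and only if $2y<c+e$ and, if $2y=(2q+1)e$ for some integer $q$, then $y\notin v(xR:\mathfrak m)$.
   Context: Let $(R,\mathfrak m)$ be a one-dimensional local Noetherian domain with quotient field $K$, not regular, analytically irreducible (the integral closure $\overline R$ of $R$ in $K$ is a DVR and a finite $R$-module) and residually rational. Let $v$ be the valuation of $\overline R$ normalized so a uniformizer $t$ has value 1, $v(R)=\{v(a):a\in R\setminus\{0\}\}$, $\mathfrak C=(R:_K\overline R)=t^c\overline R$ with $c$ the least element of $v(R)$ with $c+\mathbb N\subseteq v(R)$, $r=\ell_R((R:_K\mathfrak m)/R)$, $e$ the least positive element of $v(R)$. Let $x\in\mathfrak m$ with $v(x)=e$, $k=\ell_R(R/(\mathfrak C+xR))$, $(xR:\mathfrak m)=\{a\in K:a\mathfrak m\subseteq xR\}$ (an ideal of $R$) with value set $v(xR:\mathfrak m)$. Let $p$ be the integer with $c-e\le pe<c$. When $k=2$, $y_1$ is the unique $y\in v(R)$ with $0<y<c$ and $y-e\notin v(R)$ (the unique nonzero element of $v(R)\setminus v(\mathfrak C+xR)$). *)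

theory Defs
  imports "HOL-Library.Extended_Nat"
begin

text \<open>The ambient type 'a (a field) plays the role of the quotient field K.\<close>

definition subring :: "'a::field set \<Rightarrow> bool" where
  "subring R \<longleftrightarrow> 0 \<in> R \<and> 1 \<in> R \<and> (\<forall>a\<in>R. \<forall>b\<in>R. a + b \<in> R \<and> a * b \<in> R \<and> - a \<in> R)"

definition submod :: "'a::field set \<Rightarrow> 'a set \<Rightarrow> bool" where
  "submod R M \<longleftrightarrow> 0 \<in> M \<and> (\<forall>a\<in>M. \<forall>b\<in>M. a + b \<in> M) \<and> (\<forall>r\<in>R. \<forall>a\<in>M. r * a \<in> M)"

definition ideal :: "'a::field set \<Rightarrow> 'a set \<Rightarrow> bool" where
  "ideal R I \<longleftrightarrow> I \<subseteq> R \<and> submod R I"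

definition prime_ideal :: "'a::field set \<Rightarrow> 'a set \<Rightarrow> bool" where
  "prime_ideal R P \<longleftrightarrow> ideal R P \<and> P \<noteq> R \<and> (\<forall>a\<in>R. \<forall>b\<in>R. a * b \<in> P \<longrightarrow> a \<in> P \<or> b \<in> P)"

definition lin_comb :: "'a::field set \<Rightarrow> 'a set \<Rightarrow> 'a set" where
  "lin_comb R B = {\<Sum>b\<in>B. f b * b | f. \<forall>b\<in>B. f b \<in> R}"

definition fin_gen :: "'a::field set \<Rightarrow> 'a set \<Rightarrow> bool" where
  "fin_gen R M \<longleftrightarrow> (\<exists>B. finite B \<and> B \<subseteq> M \<and> M = lin_comb R B)"

definition noetherian :: "'a::field set \<Rightarrow> bool" where
  "noetherian R \<longleftrightarrow> (\<forall>I. ideal R I \<longrightarrow> fin_gen R I)"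

definition nonunits :: "'a::field set \<Rightarrow> 'a set" where
  "nonunits R = {a \<in> R. \<not> (\<exists>b\<in>R. a * b = 1)}"

definition local_ring :: "'a::field set \<Rightarrow> bool" where
  "local_ring R \<longleftrightarrow> ideal R (nonunits R)"

text \<open>Krull dimension one (for a local domain): the prime ideals are exactly 0 and m, and m \<noteq> 0.\<close>
definition dim_one :: "'a::field set \<Rightarrow> bool" where
  "dim_one R \<longleftrightarrow> nonunits R \<noteq> {0} \<and> (\<forall>P. prime_ideal R P \<longrightarrow> P = {0} \<or> P = nonunits R)"

text \<open>One-dimensional regular local ring: maximal ideal principal.\<close>
definition regular1 :: "'a::field set \<Rightarrow> bool" where
  "regular1 R \<longleftrightarrow> (\<exists>g\<in>R. nonunits R = {g * a | a. a \<in> R})"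

definition quotient_field_is_K :: "'a::field set \<Rightarrow> bool" where
  "quotient_field_is_K R \<longleftrightarrow> (\<forall>z. \<exists>a\<in>R. \<exists>b\<in>R. b \<noteq> 0 \<and> z = a / b)"

definition integral_over :: "'a::field set \<Rightarrow> 'a \<Rightarrow> bool" where
  "integral_over R a \<longleftrightarrow> (\<exists>n cs. (\<forall>i<n. cs i \<in> R) \<and> a ^ n + (\<Sum>i<n. cs i * a ^ i) = 0)"

text \<open>Normalized discrete valuation on K (values of nonzero elements), with uniformizer of value 1.\<close>
definition normalized_dval :: "('a::field \<Rightarrow> int) \<Rightarrow> bool" where
  "normalized_dval v \<longleftrightarrow>
     (\<forall>a b. a \<noteq> 0 \<longrightarrow> b \<noteq> 0 \<longrightarrow> v (a * b) = v a + v b) \<and>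
     (\<forall>a b. a \<noteq> 0 \<longrightarrow> b \<noteq> 0 \<longrightarrow> a + b \<noteq> 0 \<longrightarrow> v (a + b) \<ge> min (v a) (v b)) \<and>
     (\<exists>t. t \<noteq> 0 \<and> v t = 1)"

definition vring :: "('a::field \<Rightarrow> int) \<Rightarrow> 'a set" where
  "vring v = {a. a = 0 \<or> v a \<ge> 0}"

definition int_closure :: "'a::field set \<Rightarrow> 'a set" where
  "int_closure R = {a. integral_over R a}"

text \<open>Standing hypotheses: R one-dimensional local Noetherian domain with quotient field K,
  not regular, analytically irreducible (integral closure is the DVR of v and a finite
  R-module), residually rational (R/m = residue field of the DVR).\<close>
definition standing :: "'a::field set \<Rightarrow> ('a \<Rightarrow> int) \<Rightarrow> bool" where
  "standing R v \<longleftrightarrow> subring R \<and> quotient_field_is_K R \<and> local_ring R \<and> noetherian R \<and> dim_one R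
     \<and> \<not> regular1 R \<and> normalized_dval v \<and> int_closure R = vring v \<and> fin_gen R (vring v)
     \<and> (\<forall>a\<in>vring v. \<exists>b\<in>R. a - b = 0 \<or> v (a - b) > 0)"

definition vals :: "('a::field \<Rightarrow> int) \<Rightarrow> 'a set \<Rightarrow> int set" where
  "vals v S = {v a | a. a \<in> S \<and> a \<noteq> 0}"

definition cond_c :: "'a::field set \<Rightarrow> ('a \<Rightarrow> int) \<Rightarrow> int" where
  "cond_c R v = (LEAST n. n \<in> vals v R \<and> (\<forall>j\<ge>n. j \<in> vals v R))"

definition mult_e :: "'a::field set \<Rightarrow> ('a \<Rightarrow> int) \<Rightarrow> int" where
  "mult_e R v = (LEAST n. n \<in> vals v R \<and> n > 0)"

definition colon :: "'a::field set \<Rightarrow> 'a set \<Rightarrow> 'a set" where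
  "colon A B = {a. \<forall>b\<in>B. a * b \<in> A}"

definition conductor :: "'a::field set \<Rightarrow> ('a \<Rightarrow> int) \<Rightarrow> 'a set" where
  "conductor R v = colon R (vring v)"

definition principal :: "'a::field set \<Rightarrow> 'a \<Rightarrow> 'a set" where
  "principal R x = {x * a | a. a \<in> R}"

definition setsum :: "'a::field set \<Rightarrow> 'a set \<Rightarrow> 'a set" where
  "setsum A B = {a + b | a b. a \<in> A \<and> b \<in> B}"

text \<open>Length of the R-module M/N (N \<subseteq> M submodules of K): supremum of lengths of strict
  chains of R-submodules from N to M (these correspond to chains of submodules of M/N).\<close>
definition submod_chain :: "'a::field set \<Rightarrow> 'a set \<Rightarrow> 'a set \<Rightarrow> nat \<Rightarrow> bool" where
  "submod_chain R N M n \<longleftrightarrow> (\<exists>f :: nat \<Rightarrow> 'a set. f 0 = N \<and> f n = M \<and>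
      (\<forall>i\<le>n. submod R (f i)) \<and> (\<forall>i<n. f i \<subset> f (Suc i)))"

definition mlength :: "'a::field set \<Rightarrow> 'a set \<Rightarrow> 'a set \<Rightarrow> enat" where
  "mlength R N M = (SUP n \<in> {n. submod_chain R N M n}. enat n)"

end

theory Submission
  imports Defs
begin


lemma int_least:
  fixes P :: "int \<Rightarrow> bool"
  assumes "P n" "\<And>n. P n \<Longrightarrow> n \<ge> 0"
  shows "P (Least P) \<and> (\<forall>m. P m \<longrightarrow> Least P \<le> m)"
proof -
  define k where "k = (LEAST k::nat. P (int k))"
  have n0: "n \<ge> 0" using assms by auto
  have Pk: "P (int k)" unfolding k_def by (rule LeastI[of _ "nat n"]) (use assms n0 in auto)
  have mn: "\<forall>m. P m \<longrightarrow> int k \<le> m"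
  proof (intro allI impI)
    fix m assume "P m"
    then have "m \<ge> 0" using assms by auto
    have "k \<le> nat m" unfolding k_def by (rule Least_le) (use \<open>P m\<close> \<open>m \<ge> 0\<close> in auto)
    then show "int k \<le> m" using \<open>m \<ge> 0\<close> by auto
  qed
  have "Least P = int k" by (rule Least_equality) (use Pk mn in auto)
  then show ?thesis using Pk mn by auto
qed

locale stdg =
  fixes R :: "'a::field set" and v :: "'a \<Rightarrow> int"
  assumes st: "standing R v"
begin

lemma sr: "subring R" using st unfolding standing_def by auto
lemma dv: "normalized_dval v" using st unfolding standing_def by auto
lemma ic: "int_closure R = vring v" using st unfolding standing_def by auto
lemma fg: "fin_gen R (vring v)" using st unfolding standing_def by auto
lemma rr: "\<forall>a\<in>vring v. \<exists>b\<in>R. a - b = 0 \<or> v (a - b) > 0" using st unfolding standing_def by auto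
lemma qf: "quotient_field_is_K R" using st unfolding standing_def by auto

lemma R0: "0 \<in> R" and R1: "1 \<in> R" using sr unfolding subring_def by auto
lemma Radd: "a \<in> R \<Longrightarrow> b \<in> R \<Longrightarrow> a + b \<in> R" using sr unfolding subring_def by auto
lemma Rmul: "a \<in> R \<Longrightarrow> b \<in> R \<Longrightarrow> a * b \<in> R" using sr unfolding subring_def by auto
lemma Rneg: "a \<in> R \<Longrightarrow> - a \<in> R" using sr unfolding subring_def by auto
lemma Rdiff: "a \<in> R \<Longrightarrow> b \<in> R \<Longrightarrow> a - b \<in> R" using Radd Rneg by (metis diff_conv_add_uminus)
lemma Rpow: "a \<in> R \<Longrightarrow> a ^ n \<in> R" by (induction n) (auto intro: R1 Rmul)
lemma Rsum: "(\<And>i. i \<in> A \<Longrightarrow> f i \<in> R) \<Longrightarrow> sum f A \<in> R"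
  by (induction A rule: infinite_finite_induct) (auto intro: R0 Radd)
lemma Rprod: "(\<And>i. i \<in> A \<Longrightarrow> f i \<in> R) \<Longrightarrow> prod f A \<in> R"
  by (induction A rule: infinite_finite_induct) (auto intro: R1 Rmul)

lemma vm: "a \<noteq> 0 \<Longrightarrow> b \<noteq> 0 \<Longrightarrow> v (a * b) = v a + v b"
  using dv unfolding normalized_dval_def by auto
lemma vadd: "a \<noteq> 0 \<Longrightarrow> b \<noteq> 0 \<Longrightarrow> a + b \<noteq> 0 \<Longrightarrow> v (a + b) \<ge> min (v a) (v b)"
  using dv unfolding normalized_dval_def by auto
lemma t_ex: "\<exists>t. t \<noteq> 0 \<and> v t = 1"
  using dv unfolding normalized_dval_def by auto

lemma v1: "v 1 = 0" using vm[of 1 1] by simp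
lemma vneg1: "v (-1) = 0" using vm[of "-1" "-1"] v1 by simp
lemma vneg: "v (- a) = v a"
proof (cases "a = 0")
  case True then show ?thesis by simp
next
  case False then show ?thesis using vm[of "-1" a] vneg1 by simp
qed
lemma vinv: "a \<noteq> 0 \<Longrightarrow> v (inverse a) = - v a"
  using vm[of a "inverse a"] v1 by simp
lemma vdiv: "a \<noteq> 0 \<Longrightarrow> b \<noteq> 0 \<Longrightarrow> v (a / b) = v a - v b"
  by (simp add: divide_inverse vm vinv)
lemma vpow: "a \<noteq> 0 \<Longrightarrow> v (a ^ n) = int n * v a"
  by (induction n) (auto simp: v1 vm algebra_simps)
lemma vstrict: assumes "a \<noteq> 0" "b \<noteq> 0" "v a < v b" shows "a + b \<noteq> 0 \<and> v (a + b) = v a"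
proof -
  have ab: "a + b \<noteq> 0" proof assume "a + b = 0" then have "b = - a" by (simp add: add_eq_0_iff) 
    then show False using assms vneg by simp qed
  have "v (a + b) \<ge> v a" using vadd[OF assms(1,2) ab] assms by simp
  moreover have "v a \<ge> min (v (a + b)) (v (-b))" using vadd[of "a+b" "-b"] ab assms by simp
  ultimately show ?thesis using ab assms vneg by auto
qed
lemma vdiff_gt: assumes "a \<noteq> 0" "b \<noteq> 0" "v a < v b" shows "a - b \<noteq> 0 \<and> v (a - b) = v a"
  using vstrict[of a "-b"] assms vneg by simp

lemma R_V: "a \<in> R \<Longrightarrow> a \<noteq> 0 \<Longrightarrow> v a \<ge> 0"
proof -
  assume "a \<in> R" "a \<noteq> 0"
  have "integral_over R a" unfolding integral_over_def
    by (rule exI[of _ 1], rule exI[of _ "\<lambda>_. - a"]) (use \<open>a \<in> R\<close> Rneg in auto)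
  then have "a \<in> vring v" using ic unfolding int_closure_def by auto
  then show ?thesis using \<open>a \<noteq> 0\<close> unfolding vring_def by auto
qed

lemma unit: assumes "u \<in> R" "u \<noteq> 0" "v u = 0" shows "inverse u \<in> R"
proof -
  define w where "w = inverse u"
  have "w \<in> vring v" using assms vinv unfolding w_def vring_def by auto
  then have "integral_over R w" using ic unfolding int_closure_def by auto
  then obtain n cs where cs: "\<forall>i<n. cs i \<in> R" and eq: "w ^ n + (\<Sum>i<n. cs i * w ^ i) = 0"
    unfolding integral_over_def by auto
  have "n \<noteq> 0" proof assume "n = 0" then show False using eq by simp qed
  then obtain m where n: "n = Suc m" by (cases n) auto
  have wu: "w * u = 1" using assms unfolding w_def by simp
  have pw: "w ^ i * u ^ m = u ^ (m - i)" if "i \<le> m" for i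
  proof -
    have "u ^ m = u ^ (m - i) * u ^ i" using that by (simp add: power_add[symmetric])
    then have "w ^ i * u ^ m = (w * u) ^ i * u ^ (m - i)" by (simp add: power_mult_distrib algebra_simps)
    then show ?thesis using wu by simp
  qed
  have "0 = (w ^ n + (\<Sum>i<n. cs i * w ^ i)) * u ^ m" using eq by simp
  also have "\<dots> = w + (\<Sum>i<n. cs i * u ^ (m - i))"
  proof -
    have "w ^ n * u ^ m = w" using pw[of m] n by simp
    moreover have "(\<Sum>i<n. cs i * w ^ i) * u ^ m = (\<Sum>i<n. cs i * u ^ (m - i))"
      unfolding sum_distrib_right by (rule sum.cong) (use pw n in \<open>auto simp: mult.assoc\<close>)
    ultimately show ?thesis by (simp add: distrib_right)
  qed
  finally have "w = - (\<Sum>i<n. cs i * u ^ (m - i))" by (simp add: eq_neg_iff_add_eq_0)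
  moreover have "(\<Sum>i<n. cs i * u ^ (m - i)) \<in> R" by (rule Rsum) (use cs assms in \<open>auto intro: Rmul Rpow\<close>)
  ultimately show ?thesis unfolding w_def using Rneg by auto
qed

lemma m_pos: assumes "b \<in> nonunits R" "b \<noteq> 0" shows "v b > 0"
proof -
  have bR: "b \<in> R" using assms unfolding nonunits_def by auto
  have "v b \<ge> 0" using R_V bR assms by auto
  moreover have "v b \<noteq> 0"
  proof
    assume "v b = 0"
    then have "inverse b \<in> R" using unit bR assms by auto
    then show False using assms unfolding nonunits_def by auto
  qed
  ultimately show ?thesis by auto
qed

lemma pos_m: assumes "b \<in> R" "b \<noteq> 0" "v b > 0" shows "b \<in> nonunits R"
proof -
  have "\<not> (\<exists>c\<in>R. b * c = 1)"
  proof
    assume "\<exists>c\<in>R. b * c = 1"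
    then obtain c where c: "c \<in> R" "b * c = 1" by auto
    then have "c \<noteq> 0" by auto
    then have "v b + v c = 0" using vm[of b c] c assms v1 by simp
    then show False using R_V[OF c(1) \<open>c \<noteq> 0\<close>] assms by simp
  qed
  then show ?thesis using assms unfolding nonunits_def by auto
qed

lemma resid: assumes "a \<noteq> 0" "b \<noteq> 0" "v a = v b"
  shows "\<exists>u\<in>R. b - u * a = 0 \<or> v (b - u * a) > v b"
proof -
  have "b / a \<in> vring v" using assms vdiv unfolding vring_def by auto
  then obtain u where u: "u \<in> R" "b / a - u = 0 \<or> v (b / a - u) > 0" using rr by auto
  have e: "b - u * a = a * (b / a - u)" using assms by (simp add: field_simps)
  show ?thesis
  proof (cases "b / a - u = 0")
    case True then show ?thesis using u e by auto
  next
    case False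
    then have "v (b - u * a) = v a + v (b / a - u)" using e vm assms by simp
    then show ?thesis using u False assms by (metis add_pos_pos less_add_same_cancel1 bexI)
  qed
qed

end


context stdg begin

lemma cond_ex: "\<exists>n. \<forall>a. a \<noteq> 0 \<longrightarrow> v a \<ge> n \<longrightarrow> a \<in> R"
proof -
  obtain B where B: "finite B" "B \<subseteq> vring v" "vring v = lin_comb R B" using fg unfolding fin_gen_def by auto
  have "\<forall>z. \<exists>ad. fst ad \<in> R \<and> snd ad \<in> R \<and> snd ad \<noteq> 0 \<and> z = fst ad / snd ad"
  proof
    fix z
    obtain a b where "a \<in> R" "b \<in> R" "b \<noteq> 0" "z = a / b" using qf unfolding quotient_field_is_K_def by blast
    then show "\<exists>ad. fst ad \<in> R \<and> snd ad \<in> R \<and> snd ad \<noteq> 0 \<and> z = fst ad / snd ad"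
      by (intro exI[of _ "(a, b)"]) auto
  qed
  from choice[OF this] obtain g where g0: "\<forall>z. fst (g z) \<in> R \<and> snd (g z) \<in> R \<and> snd (g z) \<noteq> 0 \<and> z = fst (g z) / snd (g z)"
    by blast
  have g: "fst (g z) \<in> R \<and> snd (g z) \<in> R \<and> snd (g z) \<noteq> 0 \<and> z = fst (g z) / snd (g z)" for z using g0 by blast
  define D where "D = (\<Prod>b\<in>B. snd (g b))"
  have DR: "D \<in> R" unfolding D_def by (rule Rprod) (use g in auto)
  have D0: "D \<noteq> 0" unfolding D_def using g B(1) by auto
  have Db: "D * b \<in> R" if "b \<in> B" for b
  proof -
    have Dsplit: "D = snd (g b) * (\<Prod>b'\<in>B - {b}. snd (g b'))" unfolding D_def using B(1) that
      by (simp add: prod.remove)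
    have sb: "snd (g b) * b = fst (g b)"
    proof -
      have "snd (g b) \<noteq> 0" using g[of b] by blast
      then have "snd (g b) * (fst (g b) / snd (g b)) = fst (g b)" by simp
      moreover have "b = fst (g b) / snd (g b)" using g[of b] by blast
      ultimately show ?thesis by metis
    qed
    have "D * b = (\<Prod>b'\<in>B - {b}. snd (g b')) * (snd (g b) * b)" using Dsplit by (simp add: ac_simps)
    then have "D * b = (\<Prod>b'\<in>B - {b}. snd (g b')) * fst (g b)" using sb by simp
    then show ?thesis using g by (auto intro!: Rmul Rprod)
  qed
  show ?thesis
  proof (intro exI allI impI)
    fix a assume a: "a \<noteq> 0" "v D \<le> v a"
    have "a / D \<in> vring v" unfolding vring_def using vdiv a D0 by auto
    then obtain f where f: "\<forall>b\<in>B. f b \<in> R" "a / D = (\<Sum>b\<in>B. f b * b)" using B(3) unfolding lin_comb_def by auto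
    have "a = D * (a / D)" using D0 by simp
    also have "\<dots> = (\<Sum>b\<in>B. f b * (D * b))" using f(2) by (simp add: sum_distrib_left algebra_simps)
    moreover have "(\<Sum>b\<in>B. f b * (D * b)) \<in> R" by (rule Rsum) (use f Db Rmul in blast)
    ultimately show "a \<in> R" by simp
  qed
qed

abbreviation "S \<equiv> vals v R"

lemma S_iff: "n \<in> S \<longleftrightarrow> (\<exists>a\<in>R. a \<noteq> 0 \<and> v a = n)" unfolding vals_def by auto
lemma S_nonneg: "n \<in> S \<Longrightarrow> n \<ge> 0" using R_V S_iff by auto
lemma S_add: assumes "n \<in> S" "m \<in> S" shows "n + m \<in> S"
proof -
  obtain a b where ab: "a \<in> R" "a \<noteq> 0" "v a = n" "b \<in> R" "b \<noteq> 0" "v b = m" using assms unfolding S_iff by blast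
  then have "a * b \<in> R" "a * b \<noteq> 0" "v (a * b) = n + m" using Rmul vm by auto
  then show ?thesis unfolding S_iff by blast
qed

lemma t_pow: obtains t where "t \<noteq> 0" "\<And>n. v (t ^ n) = int n"
proof -
  obtain t where t: "t \<noteq> 0" "v t = 1" using t_ex by auto
  have "v (t ^ n) = int n" for n using vpow[OF t(1), of n] t(2) by simp
  then show ?thesis by (rule that[OF t(1)])
qed

lemma big_in_S: "\<exists>n0. n0 \<ge> 0 \<and> (\<forall>a. a \<noteq> 0 \<longrightarrow> v a \<ge> n0 \<longrightarrow> a \<in> R) \<and> (\<forall>j. j \<ge> n0 \<longrightarrow> j \<in> S)"
proof -
  obtain n where n: "\<forall>a. a \<noteq> 0 \<longrightarrow> v a \<ge> n \<longrightarrow> a \<in> R" using cond_ex by auto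
  obtain t where t: "t \<noteq> 0" "\<And>n. v (t ^ n) = int n" using t_pow by blast
  define n0 where "n0 = max n 0"
  have "j \<in> S" if "j \<ge> n0" for j
  proof -
    have "t ^ nat j \<in> R" using n t that unfolding n0_def by auto
    then show ?thesis unfolding S_iff using t that n0_def by (intro bexI[of _ "t ^ nat j"]) auto
  qed
  moreover have "n0 \<ge> 0" unfolding n0_def by auto
  moreover have "\<And>a. a \<noteq> 0 \<Longrightarrow> v a \<ge> n0 \<Longrightarrow> a \<in> R" using n unfolding n0_def by auto
  ultimately show ?thesis by blast
qed

definition "cc = cond_c R v"
definition "ee = mult_e R v"

lemma c_props: "cc \<in> S" "\<And>j. j \<ge> cc \<Longrightarrow> j \<in> S"
  "\<And>m. m \<in> S \<Longrightarrow> (\<forall>j\<ge>m. j \<in> S) \<Longrightarrow> cc \<le> m"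
proof -
  obtain n0 where n0: "n0 \<ge> 0" "\<And>j. j \<ge> n0 \<Longrightarrow> j \<in> S" using big_in_S by blast
  let ?P = "\<lambda>n. n \<in> S \<and> (\<forall>j\<ge>n. j \<in> S)"
  have L: "?P (Least ?P) \<and> (\<forall>m. ?P m \<longrightarrow> Least ?P \<le> m)"
    by (rule int_least[of _ n0]) (use n0 S_nonneg in auto)
  have eqL: "Least ?P = cc" unfolding cc_def cond_c_def by (rule refl)
  have H: "?P cc \<and> (\<forall>m. ?P m \<longrightarrow> cc \<le> m)" using L unfolding eqL .
  show "cc \<in> S" using H by (rule conjE) (erule conjE)
  show "\<And>j. j \<ge> cc \<Longrightarrow> j \<in> S" using H by (elim conjE) (erule allE, erule mp)
  show "\<And>m. m \<in> S \<Longrightarrow> (\<forall>j\<ge>m. j \<in> S) \<Longrightarrow> cc \<le> m" using H[THEN conjunct2] by blast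
qed

lemma e_props: "ee \<in> S" "ee > 0" "\<And>m. m \<in> S \<Longrightarrow> m > 0 \<Longrightarrow> ee \<le> m"
proof -
  obtain n0 where n0: "n0 \<ge> 0" "\<And>j. j \<ge> n0 \<Longrightarrow> j \<in> S" using big_in_S by blast
  let ?P = "\<lambda>n. n \<in> S \<and> n > 0"
  have L: "?P (Least ?P) \<and> (\<forall>m. ?P m \<longrightarrow> Least ?P \<le> m)"
    by (rule int_least[of _ "n0+1"]) (use n0 S_nonneg in auto)
  have eqL: "Least ?P = ee" unfolding ee_def mult_e_def by (rule refl)
  have H: "?P ee \<and> (\<forall>m. ?P m \<longrightarrow> ee \<le> m)" using L unfolding eqL .
  show "ee \<in> S" using H by (elim conjE)
  show "ee > 0" using H by (elim conjE)
  show "\<And>m. m \<in> S \<Longrightarrow> m > 0 \<Longrightarrow> ee \<le> m" using H[THEN conjunct2] by blast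
qed

lemma c_nonneg: "cc \<ge> 0" using c_props S_nonneg by auto

lemma Kc: "a \<noteq> 0 \<Longrightarrow> v a \<ge> cc \<Longrightarrow> a \<in> R"
proof -
  obtain n0 where n0: "\<And>a. a \<noteq> 0 \<Longrightarrow> v a \<ge> n0 \<Longrightarrow> a \<in> R" using big_in_S by blast
  have "\<forall>a. a \<noteq> 0 \<longrightarrow> v a \<ge> cc \<longrightarrow> nat (n0 - v a) \<le> k \<longrightarrow> a \<in> R" for k
  proof (induction k)
    case 0 then show ?case using n0 by auto
  next
    case (Suc k)
    show ?case
    proof (intro allI impI)
      fix a assume a: "a \<noteq> 0" "v a \<ge> cc" "nat (n0 - v a) \<le> Suc k"
      show "a \<in> R"
      proof (cases "v a \<ge> n0")
        case True then show ?thesis using n0 a by auto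
      next
        case False
        have "v a \<in> S" using c_props a by auto
        then obtain b where b: "b \<in> R" "b \<noteq> 0" "v b = v a" unfolding S_iff by auto
        obtain u where u: "u \<in> R" "a - u * b = 0 \<or> v (a - u * b) > v a" using resid[OF b(2) a(1)] b by auto
        have "a - u * b \<in> R"
        proof (cases "a - u * b = 0")
          case True then show ?thesis using R0 by simp
        next
          case False
          then show ?thesis using Suc.IH u a False by auto
        qed
        then have "(a - u * b) + u * b \<in> R" using Radd Rmul u b by blast
        then show ?thesis by simp
      qed
    qed
  qed
  then show "a \<noteq> 0 \<Longrightarrow> v a \<ge> cc \<Longrightarrow> a \<in> R" by blast
qed

end


context stdg begin

definition Msup :: "'a set \<Rightarrow> int \<Rightarrow> 'a set" where
  "Msup M g = {a \<in> M. a = 0 \<or> v a \<ge> g}"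

lemma submod_Msup: assumes "submod R M" shows "submod R (Msup M g)"
  unfolding submod_def Msup_def
proof (intro conjI ballI)
  show "0 \<in> {a \<in> M. a = 0 \<or> g \<le> v a}" using assms unfolding submod_def by auto
next
  fix a b assume a: "a \<in> {a \<in> M. a = 0 \<or> g \<le> v a}" and b: "b \<in> {a \<in> M. a = 0 \<or> g \<le> v a}"
  have "a + b \<in> M" using a b assms unfolding submod_def by auto
  moreover have "a + b = 0 \<or> g \<le> v (a + b)"
  proof (cases "a = 0 \<or> b = 0 \<or> a + b = 0")
    case True then show ?thesis using a b by auto
  next
    case False then show ?thesis using vadd[of a b] a b by auto
  qed
  ultimately show "a + b \<in> {a \<in> M. a = 0 \<or> g \<le> v a}" by auto
next
  fix r a assume r: "r \<in> R" and a: "a \<in> {a \<in> M. a = 0 \<or> g \<le> v a}"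
  have "r * a \<in> M" using r a assms unfolding submod_def by auto
  moreover have "r * a = 0 \<or> g \<le> v (r * a)"
  proof (cases "r = 0 \<or> a = 0")
    case True then show ?thesis by auto
  next
    case False then show ?thesis using vm[of r a] R_V[OF r] a by auto
  qed
  ultimately show "r * a \<in> {a \<in> M. a = 0 \<or> g \<le> v a}" by auto
qed

lemma submod_setsum: assumes "submod R A" "submod R B" shows "submod R (setsum A B)"
  unfolding submod_def setsum_def
proof (intro conjI ballI)
  show "0 \<in> {a + b |a b. a \<in> A \<and> b \<in> B}" using assms unfolding submod_def by force
next
  fix s t assume "s \<in> {a + b |a b. a \<in> A \<and> b \<in> B}" "t \<in> {a + b |a b. a \<in> A \<and> b \<in> B}"
  then obtain a b a' b' where "s = a + b" "t = a' + b'" "a \<in> A" "b \<in> B" "a' \<in> A" "b' \<in> B" by auto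
  moreover have "s + t = (a + a') + (b + b')" using calculation by (simp add: algebra_simps)
  ultimately show "s + t \<in> {a + b |a b. a \<in> A \<and> b \<in> B}" using assms unfolding submod_def by blast
next
  fix r s assume r: "r \<in> R" and "s \<in> {a + b |a b. a \<in> A \<and> b \<in> B}"
  then obtain a b where "s = a + b" "a \<in> A" "b \<in> B" by auto
  moreover have "r * s = r * a + r * b" using calculation by (simp add: algebra_simps)
  ultimately show "r * s \<in> {a + b |a b. a \<in> A \<and> b \<in> B}" using assms r unfolding submod_def by blast
qed

lemma setsum_sub: "submod R M \<Longrightarrow> A \<subseteq> M \<Longrightarrow> B \<subseteq> M \<Longrightarrow> setsum A B \<subseteq> M"
  unfolding setsum_def submod_def by blast
lemma setsum_left: "submod R B \<Longrightarrow> A \<subseteq> setsum A B"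
  unfolding setsum_def submod_def by force
lemma vals_mono: "A \<subseteq> B \<Longrightarrow> vals v A \<subseteq> vals v B" unfolding vals_def by blast

lemma submod_neg: assumes "submod R M" "a \<in> M" shows "- a \<in> M"
proof -
  have "(-1) * a \<in> M" using assms Rneg[OF R1] unfolding submod_def by blast
  then show ?thesis by simp
qed

lemma strict_vals:
  assumes A: "submod R A" and B: "submod R B" and AB: "A \<subseteq> B"
    and K: "\<And>a. a \<noteq> 0 \<Longrightarrow> v a \<ge> cc \<Longrightarrow> a \<in> A" and V: "vals v B \<subseteq> vals v A"
  shows "B \<subseteq> A"
proof -
  have "\<forall>b\<in>B. b \<noteq> 0 \<longrightarrow> nat (cc - v b) \<le> k \<longrightarrow> b \<in> A" for k
  proof (induction k)
    case 0 then show ?case using K by auto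
  next
    case (Suc k)
    show ?case
    proof (intro ballI impI)
      fix b assume b: "b \<in> B" "b \<noteq> 0" "nat (cc - v b) \<le> Suc k"
      show "b \<in> A"
      proof (cases "v b \<ge> cc")
        case True then show ?thesis using K b by auto
      next
        case False
        have "v b \<in> vals v A" using V b unfolding vals_def by blast
        then obtain a where a: "a \<in> A" "a \<noteq> 0" "v a = v b" unfolding vals_def by auto
        obtain u where u: "u \<in> R" "b - u * a = 0 \<or> v (b - u * a) > v b" using resid[OF a(2) b(2)] a by auto
        have ua: "u * a \<in> A" using A u a unfolding submod_def by auto
        then have "- (u * a) \<in> B" using AB submod_neg[OF B] by auto
        then have "b + - (u * a) \<in> B" using b B unfolding submod_def by blast
        then have bB: "b - u * a \<in> B" by simp
        have "b - u * a \<in> A"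
        proof (cases "b - u * a = 0")
          case True then show ?thesis using A unfolding submod_def by simp
        next
          case False
          then have "nat (cc - v (b - u * a)) \<le> k" using u b False by auto
          then show ?thesis using Suc.IH bB False by blast
        qed
        then have "(b - u * a) + u * a \<in> A" using ua A unfolding submod_def by blast
        then show ?thesis by simp
      qed
    qed
  qed
  note H = this
  show ?thesis
  proof
    fix b assume "b \<in> B"
    show "b \<in> A"
    proof (cases "b = 0")
      case True then show ?thesis using A unfolding submod_def by simp
    next
      case False then show ?thesis using H[of "nat (cc - v b)"] \<open>b \<in> B\<close> by blast
    qed
  qed
qed

end


context stdg begin

lemma chain_mono: assumes "\<forall>i<n. f i \<subset> f (Suc i)" "i \<le> j" "j \<le> n" shows "f i \<subseteq> f j"
  using assms(2,3)
proof (induction j)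
  case 0 then show ?case by simp
next
  case (Suc j)
  show ?case
  proof (cases "i = Suc j")
    case True then show ?thesis by simp
  next
    case False
    then have "f i \<subseteq> f j" using Suc by simp
    moreover have "j < n" using Suc.prems by simp
    then have "f j \<subseteq> f (Suc j)" using assms(1) by auto
    ultimately show ?thesis by blast
  qed
qed

lemma chain_upper:
  assumes ch: "submod_chain R N M n" and K: "\<And>a. a \<noteq> 0 \<Longrightarrow> v a \<ge> cc \<Longrightarrow> a \<in> N"
    and fin: "finite (vals v M - vals v N)"
  shows "n \<le> card (vals v M - vals v N)"
proof -
  obtain f where f: "f 0 = N" "f n = M" "\<forall>i\<le>n. submod R (f i)" "\<forall>i<n. f i \<subset> f (Suc i)"
    using ch unfolding submod_chain_def by auto
  define h where "h i = vals v (f i) - vals v N" for i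
  have hT: "h i \<subseteq> vals v M - vals v N" if "i \<le> n" for i
  proof -
    have "f i \<subseteq> M" using chain_mono[OF f(4) that order_refl] f(2) by simp
    then show ?thesis unfolding h_def using vals_mono by blast
  qed
  have step: "h i \<subset> h (Suc i)" if "i < n" for i
  proof -
    have sub: "f i \<subseteq> f (Suc i)" using f(4) that by auto
    have Nf: "N \<subseteq> f i" using chain_mono[OF f(4), of 0 i] f(1) that by auto
    have sm: "submod R (f i)" "submod R (f (Suc i))" using f(3) that by auto
    have "\<not> vals v (f (Suc i)) \<subseteq> vals v (f i)"
    proof
      assume "vals v (f (Suc i)) \<subseteq> vals v (f i)"
      then have "f (Suc i) \<subseteq> f i" using strict_vals[OF sm sub] K Nf by blast
      then show False using f(4) that by auto
    qed
    then obtain g where g: "g \<in> vals v (f (Suc i))" "g \<notin> vals v (f i)" by auto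
    then have "g \<notin> vals v N" using vals_mono[OF Nf] by auto
    then show ?thesis unfolding h_def using g vals_mono[OF sub] by auto
  qed
  have "i \<le> card (h i)" if "i \<le> n" for i
    using that
  proof (induction i)
    case 0 then show ?case by simp
  next
    case (Suc i)
    have "finite (h (Suc i))" using hT[OF Suc.prems] fin finite_subset by auto
    moreover have "h i \<subset> h (Suc i)" using step Suc.prems by simp
    ultimately have "card (h i) < card (h (Suc i))" by (rule psubset_card_mono)
    then show ?case using Suc by auto
  qed
  then have "n \<le> card (h n)" by auto
  also have "\<dots> \<le> card (vals v M - vals v N)" using hT[of n] fin by (auto intro: card_mono)
  finally show ?thesis .
qed

lemma Msup_vals: assumes N: "submod R N" and g': "g' \<in> vals v (setsum N (Msup M g))" and lt: "g' < g"
  shows "g' \<in> vals v N"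
proof -
  obtain s where s: "s \<in> setsum N (Msup M g)" "s \<noteq> 0" "v s = g'" using g' unfolding vals_def by auto
  then obtain a b where ab: "s = a + b" "a \<in> N" "b \<in> Msup M g" unfolding setsum_def by auto
  show ?thesis
  proof (cases "b = 0")
    case True then show ?thesis using ab s unfolding vals_def by auto
  next
    case False
    then have vb: "v b \<ge> g" using ab unfolding Msup_def by auto
    have "a = s + (- b)" using ab by simp
    moreover have "- b \<noteq> 0" "v (- b) > v s" using False vb s lt vneg by auto
    ultimately have "a \<noteq> 0 \<and> v a = v s" using vstrict[of s "- b"] s by auto
    then have "a \<in> N" "a \<noteq> 0" "v a = g'" using ab s by auto
    then show ?thesis unfolding vals_def by blast
  qed
qed

lemma chain_lower:
  assumes "submod R N" "submod R M" "N \<subseteq> M" "finite G" "G \<noteq> {}" "G \<subseteq> vals v M - vals v N"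
  shows "submod_chain R N M (card G)"
  using assms
proof (induction "card G" arbitrary: N G)
  case 0 then show ?case by auto
next
  case (Suc k)
  define g where "g = Max G"
  have gG: "g \<in> G" unfolding g_def using Suc.prems Max_in by auto
  have gmax: "\<And>g'. g' \<in> G \<Longrightarrow> g' \<le> g" unfolding g_def using Suc.prems by auto
  define N' where "N' = setsum N (Msup M g)"
  have N'sm: "submod R N'" unfolding N'_def using submod_setsum submod_Msup Suc.prems by auto
  have N'M: "N' \<subseteq> M" unfolding N'_def using setsum_sub[OF Suc.prems(2,3)] Msup_def by auto
  have NN': "N \<subseteq> N'" unfolding N'_def using setsum_left submod_Msup Suc.prems by auto
  have gN': "g \<in> vals v N'"
  proof -
    obtain m where m: "m \<in> M" "m \<noteq> 0" "v m = g" using gG Suc.prems(6) unfolding vals_def by auto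
    moreover have "0 \<in> N" using Suc.prems(1) unfolding submod_def by auto
    ultimately have "0 + m \<in> N'" unfolding N'_def setsum_def Msup_def by blast
    then show ?thesis using m unfolding vals_def by force
  qed
  have NneN': "N \<subset> N'" using NN' gN' gG Suc.prems(6) by auto
  show ?case
  proof (cases "G - {g} = {}")
    case True
    then have "G = {g}" using gG by auto
    then have "card G = 1" by simp
    moreover have "N \<noteq> M" using gG Suc.prems(6) by auto
    ultimately show ?thesis unfolding submod_chain_def
      by (intro exI[of _ "\<lambda>i. if i = 0 then N else M"]) (use Suc.prems in auto)
  next
    case False
    have cG: "card (G - {g}) = k" using Suc.hyps(2) gG Suc.prems by auto
    have sub: "G - {g} \<subseteq> vals v M - vals v N'"
    proof
      fix g' assume g': "g' \<in> G - {g}"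
      then have "g' < g" using gmax by force
      then have "g' \<notin> vals v N'" using Msup_vals[OF Suc.prems(1)] g' Suc.prems(6) unfolding N'_def by blast
      then show "g' \<in> vals v M - vals v N'" using g' Suc.prems(6) by auto
    qed
    have "submod_chain R N' M (card (G - {g}))"
      by (rule Suc.hyps(1)) (use cG N'sm Suc.prems N'M False sub in auto)
    then obtain f where f: "f 0 = N'" "f k = M" "\<forall>i\<le>k. submod R (f i)" "\<forall>i<k. f i \<subset> f (Suc i)"
      unfolding submod_chain_def cG by auto
    define f' where "f' i = (if i = 0 then N else f (i - 1))" for i
    have "f' 0 = N" "f' (Suc k) = M" unfolding f'_def using f by auto
    moreover have "\<forall>i\<le>Suc k. submod R (f' i)" unfolding f'_def using f Suc.prems(1) by auto
    moreover have "\<forall>i<Suc k. f' i \<subset> f' (Suc i)"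
    proof (intro allI impI)
      fix i assume "i < Suc k"
      then show "f' i \<subset> f' (Suc i)" unfolding f'_def using f NneN' by (cases i) auto
    qed
    ultimately show ?thesis unfolding submod_chain_def using Suc.hyps(2) by metis
  qed
qed

lemma mlength_eq:
  assumes "submod R N" "submod R M" "N \<subseteq> M" "finite (vals v M - vals v N)"
    and K: "\<And>a. a \<noteq> 0 \<Longrightarrow> v a \<ge> cc \<Longrightarrow> a \<in> N"
  shows "mlength R N M = enat (card (vals v M - vals v N))"
proof -
  let ?T = "vals v M - vals v N"
  have ex: "submod_chain R N M (card ?T)"
  proof (cases "?T = {}")
    case True
    then have "M \<subseteq> N" using strict_vals[OF assms(1,2,3) K] by auto
    then have "M = N" using assms by auto
    then show ?thesis using True assms unfolding submod_chain_def by (intro exI[of _ "\<lambda>_. N"]) auto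
  next
    case False then show ?thesis using chain_lower assms by auto
  qed
  have up: "\<And>n. submod_chain R N M n \<Longrightarrow> n \<le> card ?T" using chain_upper K assms(4) by blast
  show ?thesis unfolding mlength_def
  proof (rule antisym)
    show "(SUP n\<in>{n. submod_chain R N M n}. enat n) \<le> enat (card ?T)"
      by (rule SUP_least) (use up in auto)
    show "enat (card ?T) \<le> (SUP n\<in>{n. submod_chain R N M n}. enat n)"
      by (rule SUP_upper) (use ex in auto)
  qed
qed

lemma mlength_ge: "submod_chain R N M n \<Longrightarrow> enat n \<le> mlength R N M"
  unfolding mlength_def by (rule SUP_upper) auto

end



locale mn = stdg +
  fixes x :: 'a and y :: int
  assumes xm: "x \<in> nonunits R" and x0: "x \<noteq> 0" and vx: "v x = ee"
    and k2: "mlength R (setsum (conductor R v) (principal R x)) R = 2"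
    and yS: "y \<in> S" and y0: "0 < y" and yc: "y < cc" and ye: "y - ee \<notin> S"
begin

lemma xR: "x \<in> R" using xm unfolding nonunits_def by auto
lemma vxj: "v (x ^ j) = int j * ee" using vpow[OF x0] vx by simp
lemma xj0: "x ^ j \<noteq> 0" using x0 by simp
lemma jeS: "int j * ee \<in> S" unfolding S_iff using xj0 vxj Rpow[OF xR] by blast
lemma one_S: "0 \<in> S" unfolding S_iff using R1 v1 by force
lemma e_pos: "ee > 0" using e_props by auto
lemma y_gt_e: "y > ee"
proof -
  have "y \<ge> ee" using e_props(3) yS y0 by auto
  moreover have "y \<noteq> ee" using ye one_S by auto
  ultimately show ?thesis by auto
qed
lemma c_gt_e: "cc > ee" using y_gt_e yc by auto
lemma yjS: "y + int j * ee \<in> S" using S_add[OF yS jeS] .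

abbreviation "C \<equiv> conductor R v"
abbreviation "P \<equiv> principal R x"

lemma V_1: "1 \<in> vring v" unfolding vring_def using v1 by auto
lemma C_sub: "C \<subseteq> R" unfolding conductor_def colon_def using V_1 by force
lemma submod_R: "submod R R" unfolding submod_def using R0 Radd Rmul by auto
lemma submod_C: "submod R C" unfolding submod_def conductor_def colon_def
  using R0 Radd Rmul by (auto simp: distrib_right mult.assoc)
lemma submod_P: "submod R P" unfolding submod_def principal_def
proof (intro conjI ballI)
  show "0 \<in> {x * a |a. a \<in> R}" using R0 by force
next
  fix a b assume "a \<in> {x * a |a. a \<in> R}" "b \<in> {x * a |a. a \<in> R}"
  then obtain a' b' where "a = x * a'" "b = x * b'" "a' \<in> R" "b' \<in> R" by auto
  then show "a + b \<in> {x * a |a. a \<in> R}" using Radd by (auto simp: distrib_left intro!: exI[of _ "a' + b'"])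
next
  fix r a assume "r \<in> R" "a \<in> {x * a |a. a \<in> R}"
  then obtain a' where "a = x * a'" "a' \<in> R" by auto
  then show "r * a \<in> {x * a |a. a \<in> R}" using Rmul \<open>r \<in> R\<close> by (auto simp: algebra_simps intro!: exI[of _ "r * a'"])
qed
lemma P_sub: "P \<subseteq> R" unfolding principal_def using xR Rmul by auto

lemma C_vals: assumes "a \<in> C" "a \<noteq> 0" shows "v a \<ge> cc"
proof -
  obtain t where t: "t \<noteq> 0" "\<And>n. v (t ^ n) = int n" using t_pow by blast
  have aR: "\<And>b. b \<in> vring v \<Longrightarrow> a * b \<in> R" using assms unfolding conductor_def colon_def by auto
  have "v a \<in> S" using aR[OF V_1] assms unfolding S_iff by auto
  moreover have "\<forall>j\<ge>v a. j \<in> S"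
  proof (intro allI impI)
    fix j assume j: "j \<ge> v a"
    have "t ^ nat (j - v a) \<in> vring v" unfolding vring_def using t by auto
    then have "a * t ^ nat (j - v a) \<in> R" by (rule aR)
    moreover have "v (a * t ^ nat (j - v a)) = j" using vm[of a] t assms j by simp
    moreover have "a * t ^ nat (j - v a) \<noteq> 0" using assms t by simp
    ultimately show "j \<in> S" unfolding S_iff by blast
  qed
  ultimately show ?thesis using c_props(3) by blast
qed

lemma Kc_C: assumes "a \<noteq> 0" "v a \<ge> cc" shows "a \<in> C"
  unfolding conductor_def colon_def
proof (intro CollectI ballI)
  fix b assume "b \<in> vring v"
  show "a * b \<in> R"
  proof (cases "b = 0")
    case True then show ?thesis using R0 by simp
  next
    case False
    then have "v b \<ge> 0" using \<open>b \<in> vring v\<close> unfolding vring_def by auto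
    then show ?thesis using Kc[of "a * b"] vm[of a b] assms False by simp
  qed
qed

lemma CP_vals: assumes "s \<in> vals v (setsum C P)" shows "s \<ge> cc \<or> s - ee \<in> S"
proof -
  obtain w where w: "w \<in> setsum C P" "w \<noteq> 0" "v w = s" using assms unfolding vals_def by auto
  then obtain a b where ab: "w = a + b" "a \<in> C" "b \<in> P" unfolding setsum_def by auto
  then obtain r where r: "b = x * r" "r \<in> R" unfolding principal_def by auto
  show ?thesis
  proof (cases "b = 0 \<or> v b \<ge> cc")
    case True
    show ?thesis
    proof (cases "a = 0")
      case True then show ?thesis using ab w \<open>b = 0 \<or> v b \<ge> cc\<close> by auto
    next
      case False
      then have va: "v a \<ge> cc" using C_vals ab by auto
      show ?thesis
      proof (cases "b = 0")
        case True then show ?thesis using ab w va by auto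
      next
        case False
        then show ?thesis using vadd[of a b] ab w va \<open>b = 0 \<or> v b \<ge> cc\<close> \<open>a \<noteq> 0\<close> by auto
      qed
    qed
  next
    case False
    then have b0: "b \<noteq> 0" and vb: "v b < cc" by auto
    then have r0: "r \<noteq> 0" using r by auto
    have "v w = v b"
    proof (cases "a = 0")
      case True then show ?thesis using ab by simp
    next
      case False
      then have "v b < v a" using C_vals ab vb by force
      then show ?thesis using vstrict[of b a] b0 False ab by (simp add: add.commute)
    qed
    moreover have "v b = ee + v r" using r vm[of x r] x0 r0 vx by simp
    moreover have "v r \<in> S" using r r0 unfolding S_iff by auto
    ultimately show ?thesis using w by auto
  qed
qed

lemma unique_y: assumes "s \<in> S" "0 < s" "s < cc" "s - ee \<notin> S" shows "s = y"
proof (rule ccontr)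
  assume sy: "s \<noteq> y"
  let ?G = "{0, y, s}"
  have G: "?G \<subseteq> vals v R - vals v (setsum C P)"
  proof
    fix g assume g: "g \<in> ?G"
    have "g \<in> S" using g one_S yS assms by auto
    moreover have "g < cc" using g c_gt_e e_pos yc assms by auto
    moreover have "g - ee \<notin> S" using g ye assms S_nonneg e_pos by force
    ultimately show "g \<in> vals v R - vals v (setsum C P)" using CP_vals by force
  qed
  have cG: "card ?G = 3" using sy y0 assms by auto
  have sm: "submod R (setsum C P)" using submod_setsum submod_C submod_P by blast
  have "setsum C P \<subseteq> R" using setsum_sub[OF submod_R C_sub P_sub] .
  then have "submod_chain R (setsum C P) R 3" using chain_lower[OF sm submod_R _ _ _ G] cG by auto
  then have "enat 3 \<le> 2" using mlength_ge k2 by metis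
  then show False by (simp add: numeral_eq_enat)
qed

lemma struct: assumes "s \<in> S" "s < cc"
  shows "(\<exists>j. s = int j * ee) \<or> (\<exists>j. s = y + int j * ee)"
proof -
  have "\<forall>s. s \<in> S \<longrightarrow> s < cc \<longrightarrow> nat s \<le> n \<longrightarrow> (\<exists>j. s = int j * ee) \<or> (\<exists>j. s = y + int j * ee)" for n
  proof (induction n rule: less_induct)
    case (less n)
    show ?case
    proof (intro allI impI)
      fix s assume s: "s \<in> S" "s < cc" "nat s \<le> n"
      show "(\<exists>j. s = int j * ee) \<or> (\<exists>j. s = y + int j * ee)"
      proof (cases "s - ee \<in> S")
        case True
        have "s - ee \<ge> 0" using S_nonneg[OF True] .
        then have "nat (s - ee) < n" using s e_pos by auto
        then have "(\<exists>j. s - ee = int j * ee) \<or> (\<exists>j. s - ee = y + int j * ee)"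
          using less.IH[OF \<open>nat (s - ee) < n\<close>, rule_format, of "s - ee"] True s e_pos by auto
        then show ?thesis
        proof
          assume "\<exists>j. s - ee = int j * ee"
          then obtain j where "s - ee = int j * ee" by auto
          then have "s = int (Suc j) * ee" by (simp add: algebra_simps)
          then show ?thesis by blast
        next
          assume "\<exists>j. s - ee = y + int j * ee"
          then obtain j where "s - ee = y + int j * ee" by auto
          then have "s = y + int (Suc j) * ee" by (simp add: algebra_simps)
          then show ?thesis by blast
        qed
      next
        case False
        show ?thesis
        proof (cases "s = 0")
          case True then show ?thesis by (intro disjI1 exI[of _ 0]) simp
        next
          case False
          then have "s > 0" using S_nonneg s by force
          then have "s = y" using unique_y s \<open>s - ee \<notin> S\<close> by auto
          then show ?thesis by (intro disjI2 exI[of _ 0]) simp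
        qed
      qed
    qed
  qed
  then show ?thesis using assms by blast
qed

lemma ymod: "y mod ee \<noteq> 0"
proof
  assume "y mod ee = 0"
  then obtain j where j: "y = ee * j" by auto
  have "j \<ge> 1"
  proof (rule ccontr)
    assume "\<not> j \<ge> 1"
    then have "j \<le> 0" by simp
    then have "ee * j \<le> 0" using e_pos mult_nonneg_nonpos[of ee j] by simp
    then show False using j y0 by simp
  qed
  then have "int (nat (j - 1)) * ee = y - ee" using j by (simp add: algebra_simps)
  then show False using ye jeS[of "nat (j - 1)"] by simp
qed

end



lemma card_resid:
  fixes e c r :: int assumes e: "e > 0" and r: "0 \<le> r" "r < e" "r \<noteq> 0"
  shows "card {g. c - e \<le> g \<and> g < c \<and> g mod e \<noteq> 0 \<and> g mod e \<noteq> r} = nat (e - 2)"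
proof -
  let ?A = "{g. c - e \<le> g \<and> g < c \<and> g mod e \<noteq> 0 \<and> g mod e \<noteq> r}"
  let ?B = "{0..<e} - {0, r}"
  have "bij_betw (\<lambda>g. g mod e) ?A ?B"
  proof (rule bij_betwI')
    fix g1 g2 assume g: "g1 \<in> ?A" "g2 \<in> ?A"
    show "(g1 mod e = g2 mod e) = (g1 = g2)"
    proof
      assume "g1 mod e = g2 mod e"
      then have "e dvd (g1 - g2)" by (simp only: mod_eq_dvd_iff)
      then obtain k where k: "g1 - g2 = e * k" by (elim dvdE)
      have "c - e \<le> g1" "g1 < c" "c - e \<le> g2" "g2 < c" using g by simp_all
      then have "\<bar>g1 - g2\<bar> < e" by linarith
      then have "e * \<bar>k\<bar> < e * 1" using k e by (simp add: abs_mult)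
      then have "\<bar>k\<bar> < 1" using e by (simp only: mult_less_cancel_left_pos)
      then have "k = 0" by simp
      then show "g1 = g2" using k by simp
    qed simp
  next
    fix g assume g: "g \<in> ?A"
    have "0 \<le> g mod e" "g mod e < e" using e by simp_all
    then show "g mod e \<in> ?B" using g by simp
  next
    fix k assume k: "k \<in> ?B"
    define g where "g = c - e + (k - (c - e)) mod e"
    have "g mod e = (c - e + (k - (c - e))) mod e" unfolding g_def by (simp only: mod_add_right_eq)
    also have "\<dots> = k mod e" by simp
    also have "\<dots> = k" using k by simp
    finally have gm: "g mod e = k" .
    have "0 \<le> (k - (c - e)) mod e" "(k - (c - e)) mod e < e" using e by simp_all
    then have "c - e \<le> g" "g < c" unfolding g_def by simp_all
    moreover have "g mod e \<noteq> 0" "g mod e \<noteq> r" using gm k by simp_all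
    ultimately have "g \<in> ?A" by blast
    then show "\<exists>g\<in>?A. k = g mod e" using gm by (intro bexI[of _ g]) simp_all
  qed
  then have "card ?A = card ?B" by (rule bij_betw_same_card)
  also have "card ?B = card {0..<e} - card {0, r}" using r e by (intro card_Diff_subset) simp_all
  also have "card {0..<e} = nat e" by simp
  also have "card {0, r} = 2" using r by simp
  finally show ?thesis by simp
qed

context mn begin

abbreviation "m \<equiv> nonunits R"
abbreviation "Q \<equiv> colon R m"

lemma m_R: "m \<subseteq> R" unfolding nonunits_def by auto

lemma submod_Q: "submod R Q"
proof -
  have "0 \<in> Q" unfolding colon_def using R0 by simp
  moreover have "\<forall>a1\<in>Q. \<forall>a2\<in>Q. a1 + a2 \<in> Q" unfolding colon_def using Radd by (simp add: distrib_right)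
  moreover have "\<forall>r\<in>R. \<forall>a\<in>Q. r * a \<in> Q" unfolding colon_def using Rmul by (simp add: mult.assoc)
  ultimately show ?thesis unfolding submod_def by blast
qed

lemma R_Q: "R \<subseteq> Q" unfolding colon_def using m_R Rmul by auto

lemma Q_val: assumes "z \<in> Q" "z \<noteq> 0" shows "v z + ee \<in> S"
proof -
  have "z * x \<in> R" using assms xm unfolding colon_def by auto
  moreover have "z * x \<noteq> 0" "v (z * x) = v z + ee" using assms x0 vm vx by auto
  ultimately show ?thesis unfolding S_iff by blast
qed

lemma nonreg: assumes "z \<in> Q" "z \<noteq> 0" shows "v z \<noteq> - ee"
proof
  assume vz: "v z = - ee"
  define u where "u = z * x"
  have uR: "u \<in> R" using assms xm unfolding colon_def u_def by auto
  have u0: "u \<noteq> 0" "v u = 0" using assms x0 vm vx vz unfolding u_def by auto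
  have iu: "inverse u \<in> R" using unit uR u0 by auto
  have "m = {x * a | a. a \<in> R}"
  proof
    show "m \<subseteq> {x * a | a. a \<in> R}"
    proof
      fix b assume b: "b \<in> m"
      have "z * b \<in> R" using assms b unfolding colon_def by auto
      then have "(z * b) * inverse u \<in> R" using iu Rmul by auto
      moreover have "b = x * ((z * b) * inverse u)" using u0 assms x0 unfolding u_def by (simp add: field_simps)
      ultimately show "b \<in> {x * a | a. a \<in> R}" by blast
    qed
  next
    show "{x * a | a. a \<in> R} \<subseteq> m"
    proof
      fix w assume "w \<in> {x * a | a. a \<in> R}"
      then obtain a where a: "w = x * a" "a \<in> R" by auto
      show "w \<in> m"
      proof (cases "a = 0")
        case True
        then show ?thesis using a R0 unfolding nonunits_def by auto
      next
        case False
        then have "v w > 0" using a vm[of x a] x0 vx e_pos R_V by force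
        then show ?thesis using pos_m a xR Rmul False x0 by auto
      qed
    qed
  qed
  then have "regular1 R" unfolding regular1_def using xR by blast
  then show False using st unfolding standing_def by auto
qed

abbreviation "T \<equiv> vals v Q - S"
definition "Aset = {g. cc - ee \<le> g \<and> g < cc \<and> g mod ee \<noteq> 0 \<and> g mod ee \<noteq> y mod ee}"

lemma mpos: "b \<in> m \<Longrightarrow> b \<noteq> 0 \<Longrightarrow> v b \<ge> ee"
  using m_pos e_props(3) m_R unfolding S_iff by blast

lemma A_T: assumes "g \<in> Aset" shows "g \<in> T"
proof -
  obtain t where t: "t \<noteq> 0" "\<And>n. v (t ^ n) = int n" using t_pow by blast
  have g: "cc - ee \<le> g" "g < cc" "g mod ee \<noteq> 0" "g mod ee \<noteq> y mod ee" using assms unfolding Aset_def by auto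
  have g0: "g \<ge> 0" using g c_gt_e by auto
  let ?z = "t ^ nat g"
  have vz: "v ?z = g" "?z \<noteq> 0" using t g0 by auto
  have "?z \<in> Q" unfolding colon_def
  proof (intro CollectI ballI)
    fix b assume b: "b \<in> m"
    show "?z * b \<in> R"
    proof (cases "b = 0")
      case True then show ?thesis using R0 by simp
    next
      case False
      then have "v (?z * b) \<ge> cc" using mpos[OF b] vm[of ?z b] vz g by simp
      then show ?thesis using Kc False vz by simp
    qed
  qed
  then have "g \<in> vals v Q" using vz unfolding vals_def by force
  moreover have "g \<notin> S"
  proof
    assume "g \<in> S"
    then have "(\<exists>j. g = int j * ee) \<or> (\<exists>j. g = y + int j * ee)" using struct g by auto
    then show False
    proof
      assume "\<exists>j. g = int j * ee"
      then obtain j where "g = int j * ee" by blast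
      then have "g mod ee = 0" by simp
      then show False using g by simp
    next
      assume "\<exists>j. g = y + int j * ee"
      then obtain j where "g = y + int j * ee" by blast
      then have "g mod ee = y mod ee" by simp
      then show False using g by simp
    qed
  qed
  ultimately show ?thesis by auto
qed

lemma T_char: assumes "g \<in> T" shows "g \<in> Aset \<or> g = y - ee"
proof -
  obtain z where z: "z \<in> Q" "z \<noteq> 0" "v z = g" using assms unfolding vals_def by auto
  have gS: "g \<notin> S" using assms by auto
  have ge: "g + ee \<in> S" using Q_val z by auto
  have "g + ee \<noteq> 0" using nonreg[OF z(1,2)] z(3) by linarith
  then have gp: "g + ee > 0" using S_nonneg[OF ge] by auto
  show ?thesis
  proof (cases "g + ee \<ge> cc")
    case True
    have g1: "cc - ee \<le> g" using True by simp
    have g2: "g < cc" using gS c_props(2)[of g] by (meson not_less)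
    have g3: "g mod ee \<noteq> 0"
    proof
      assume "g mod ee = 0"
      then obtain j where j: "g = ee * j" by auto
      have "ee * j > 0" using j g1 c_gt_e by simp
      then have "j \<ge> 0" using e_pos by (simp add: zero_less_mult_iff)
      then have "g = int (nat j) * ee" using j by simp
      then show False using gS jeS[of "nat j"] by simp
    qed
    have g4: "g mod ee \<noteq> y mod ee"
    proof
      assume "g mod ee = y mod ee"
      then have "ee dvd (g - y)" by (simp add: mod_eq_dvd_iff)
      then obtain j where j: "g - y = ee * j" by auto
      have "g - y > - ee" using g1 yc by simp
      then have "ee * (-1) < ee * j" using j by simp
      then have "-1 < j" using e_pos by (simp only: mult_less_cancel_left_pos)
      then have "j \<ge> 0" by simp
      then have "g = y + int (nat j) * ee" using j by (simp add: algebra_simps)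
      then show False using gS yjS[of "nat j"] by simp
    qed
    show ?thesis unfolding Aset_def using g1 g2 g3 g4 by auto
  next
    case False
    then have "(\<exists>j. g + ee = int j * ee) \<or> (\<exists>j. g + ee = y + int j * ee)" using struct ge by auto
    then show ?thesis
    proof
      assume "\<exists>j. g + ee = int j * ee"
      then obtain j where j: "g + ee = int j * ee" by auto
      then have "j \<noteq> 0" using gp by (cases j) auto
      then have "g = int (j - 1) * ee" using j by (cases j) (auto simp: algebra_simps)
      then show ?thesis using gS jeS[of "j - 1"] by simp
    next
      assume "\<exists>j. g + ee = y + int j * ee"
      then obtain j where j: "g + ee = y + int j * ee" by auto
      show ?thesis
      proof (cases j)
        case 0 then show ?thesis using j by simp
      next
        case (Suc i)
        then have "g = y + int i * ee" using j by (simp add: algebra_simps)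
        then show ?thesis using gS yjS[of i] by simp
      qed
    qed
  qed
qed

lemma T_eq: "T = Aset \<union> (if y - ee \<in> vals v Q then {y - ee} else {})"
  using A_T T_char ye by auto

lemma y_notA: "y - ee \<notin> Aset"
proof -
  have "(y - ee) mod ee = y mod ee" by (simp add: mod_diff_right_eq[symmetric])
  then show ?thesis unfolding Aset_def by auto
qed

lemma card_A: "card Aset = nat (ee - 2)"
  unfolding Aset_def by (rule card_resid) (use e_pos ymod in auto)

lemma finA: "finite Aset"
proof -
  have "Aset \<subseteq> {cc - ee..<cc}" unfolding Aset_def by auto
  then show ?thesis using finite_subset by blast
qed

lemma r_val: "mlength R R Q = enat (nat (ee - 2) + (if y - ee \<in> vals v Q then 1 else 0))"
proof -
  have fin: "finite T" using T_eq finA by auto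
  have "mlength R R Q = enat (card T)"
    by (rule mlength_eq[OF submod_R submod_Q R_Q fin]) (use Kc in auto)
  moreover have "card T = nat (ee - 2) + (if y - ee \<in> vals v Q then 1 else 0)"
    using T_eq card_A y_notA finA by (auto simp: card_insert_if)
  ultimately show ?thesis by simp
qed

end



lemma valsI: "a \<in> M \<Longrightarrow> a \<noteq> 0 \<Longrightarrow> v a = g \<Longrightarrow> g \<in> vals v M"
  unfolding vals_def by blast

context mn begin

lemma big2y: assumes "2 * y \<ge> cc + ee" shows "y - ee \<in> vals v Q"
proof -
  obtain a where a: "a \<in> R" "a \<noteq> 0" "v a = y" using yS unfolding S_iff by auto
  define z where "z = a / x"
  have z0: "z \<noteq> 0" "v z = y - ee" unfolding z_def using a x0 vdiv vx by auto
  have "\<forall>b\<in>R. b \<noteq> 0 \<longrightarrow> v b > 0 \<longrightarrow> nat (cc - v b) \<le> k \<longrightarrow> z * b \<in> R" for k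
  proof (induction k rule: less_induct)
    case (less k)
    show ?case
    proof (intro ballI impI)
      fix b assume b: "b \<in> R" "b \<noteq> 0" "v b > 0" "nat (cc - v b) \<le> k"
      have vzb: "v (z * b) = y - ee + v b" using vm[of z b] z0 b by simp
      show "z * b \<in> R"
      proof (cases "v b \<ge> cc - y + ee")
        case True
        then show ?thesis using Kc[of "z * b"] vzb z0 b by simp
      next
        case False
        then have lt: "v b < y" "v b < cc" using assms y_gt_e yc by linarith+
        have "v b \<in> S" using b unfolding S_iff by auto
        then have "(\<exists>j. v b = int j * ee) \<or> (\<exists>j. v b = y + int j * ee)" using struct lt(2) by blast
        moreover have "\<not> (\<exists>j. v b = y + int j * ee)"
        proof
          assume "\<exists>j. v b = y + int j * ee"
          then obtain j where "v b = y + int j * ee" by blast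
          moreover have "int j * ee \<ge> 0" using e_pos by simp
          ultimately show False using lt by simp
        qed
        ultimately obtain j where j: "v b = int j * ee" by blast
        have "j \<noteq> 0" proof assume "j = 0" then show False using j b(3) by simp qed
        then obtain i where i: "j = Suc i" using not0_implies_Suc by blast
        have vv: "v (x ^ j) = v b" using vxj j by simp
        obtain u where u: "u \<in> R" "b - u * x ^ j = 0 \<or> v (b - u * x ^ j) > v b"
          using resid[OF xj0[of j] b(2) vv] by blast
        have zx: "z * x = a" unfolding z_def using x0 by simp
        have "z * (u * x ^ j) = u * (z * x) * x ^ i" unfolding i by (simp add: ac_simps)
        then have zux: "z * (u * x ^ j) = u * a * x ^ i" using zx by simp
        have p1: "z * (u * x ^ j) \<in> R" unfolding zux by (intro Rmul Rpow u(1) a(1) xR)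
        have b'R: "b - u * x ^ j \<in> R" by (intro Rdiff Rmul Rpow b(1) u(1) xR)
        have p2: "z * (b - u * x ^ j) \<in> R"
        proof (cases "b - u * x ^ j = 0")
          case True then show ?thesis using R0 by simp
        next
          case False
          then have vb': "v (b - u * x ^ j) > v b" using u by auto
          have lk: "nat (cc - v (b - u * x ^ j)) < k" using vb' lt b(4) by linarith
          have pos: "v (b - u * x ^ j) > 0" using vb' b(3) by linarith
          have IH: "\<forall>w\<in>R. w \<noteq> 0 \<longrightarrow> v w > 0 \<longrightarrow> nat (cc - v w) \<le> nat (cc - v (b - u * x ^ j)) \<longrightarrow> z * w \<in> R"
            by (rule less.IH[OF lk])
          show ?thesis using IH[rule_format, OF b'R False pos order_refl] .
        qed
        have "z * b = z * (b - u * x ^ j) + z * (u * x ^ j)" by (simp add: algebra_simps)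
        then show ?thesis using Radd[OF p2 p1] by simp
      qed
    qed
  qed
  note Hk = this
  have "z \<in> Q" unfolding colon_def
  proof (intro CollectI ballI)
    fix b assume b: "b \<in> m"
    show "z * b \<in> R"
    proof (cases "b = 0")
      case True then show ?thesis using R0 by simp
    next
      case False
      have bR: "b \<in> R" using b m_R by blast
      show ?thesis using Hk[of "nat (cc - v b)", rule_format, OF bR False m_pos[OF b False] order_refl] .
    qed
  qed
  then show ?thesis using z0 by (intro valsI)
qed

lemma small2y: assumes "2 * y < cc + ee" "y - ee \<in> vals v Q"
  shows "\<exists>q. q \<ge> 1 \<and> 2 * y = (2 * q + 1) * ee"
proof -
  obtain z where z: "z \<in> Q" "z \<noteq> 0" "v z = y - ee" using assms unfolding vals_def by auto
  obtain a where a: "a \<in> R" "a \<noteq> 0" "v a = y" using yS unfolding S_iff by auto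
  have am: "a \<in> m" using pos_m a y0 by auto
  have "z * a \<in> R" using z am unfolding colon_def by auto
  moreover have "z * a \<noteq> 0" "v (z * a) = 2 * y - ee" using z a vm by auto
  ultimately have s1: "2 * y - ee \<in> S" unfolding S_iff by blast
  have s2: "2 * y - ee < cc" using assms by simp
  have "(\<exists>j. 2 * y - ee = int j * ee) \<or> (\<exists>j. 2 * y - ee = y + int j * ee)" using struct[OF s1 s2] .
  moreover have "\<not> (\<exists>j. 2 * y - ee = y + int j * ee)"
  proof
    assume "\<exists>j. 2 * y - ee = y + int j * ee"
    then obtain j where "2 * y - ee = y + int j * ee" by blast
    then have "y - ee = int j * ee" by simp
    then show False using ye jeS[of j] by simp
  qed
  ultimately obtain j where j: "2 * y - ee = int j * ee" by blast
  show ?thesis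
  proof (cases "even (int j + 1)")
    case True
    then obtain i where i: "int j + 1 = 2 * i" by (elim evenE)
    have "2 * y = (int j + 1) * ee" using j by (simp add: algebra_simps)
    also have "\<dots> = 2 * (i * ee)" using i by simp
    finally have "2 * y = 2 * (i * ee)" .
    then have "y = ee * i" by simp
    then show ?thesis using ymod by simp
  next
    case False
    then have "even (int j)" by simp
    then obtain q where q: "int j = 2 * q" by (elim evenE)
    then have eq: "2 * y = (2 * q + 1) * ee" using j by (simp add: algebra_simps)
    have "q \<ge> 1"
    proof (rule ccontr)
      assume "\<not> q \<ge> 1"
      moreover have "q \<ge> 0" using q by simp
      ultimately have "q = 0" by simp
      then show False using eq y_gt_e e_pos by simp
    qed
    then show ?thesis using eq by blast
  qed
qed

lemma colonP: "y \<in> vals v (colon P m) \<longleftrightarrow> y - ee \<in> vals v Q"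
proof
  assume "y \<in> vals v (colon P m)"
  then obtain w where w: "w \<in> colon P m" "w \<noteq> 0" "v w = y" unfolding vals_def by auto
  define z where "z = w / x"
  have "z \<in> Q" unfolding colon_def
  proof (intro CollectI ballI)
    fix b assume "b \<in> m"
    then have "w * b \<in> P" using w unfolding colon_def by auto
    then obtain r where r: "w * b = x * r" "r \<in> R" unfolding principal_def by auto
    have "z * b = r" unfolding z_def using r x0 by (simp add: field_simps)
    then show "z * b \<in> R" using r by simp
  qed
  moreover have "z \<noteq> 0" "v z = y - ee" unfolding z_def using w x0 vdiv vx by auto
  ultimately show "y - ee \<in> vals v Q" by (intro valsI)
next
  assume "y - ee \<in> vals v Q"
  then obtain z where z: "z \<in> Q" "z \<noteq> 0" "v z = y - ee" unfolding vals_def by auto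
  define w where "w = x * z"
  have "w \<in> colon P m" unfolding colon_def
  proof (intro CollectI ballI)
    fix b assume "b \<in> m"
    then have "z * b \<in> R" using z unfolding colon_def by auto
    moreover have "w * b = x * (z * b)" unfolding w_def by simp
    ultimately show "w * b \<in> P" unfolding principal_def by blast
  qed
  moreover have "w \<noteq> 0" "v w = y" unfolding w_def using z x0 vm vx by auto
  ultimately show "y \<in> vals v (colon P m)" by (intro valsI)
qed

lemma e_ge2: "ee \<ge> 2"
proof (rule ccontr)
  assume "\<not> ee \<ge> 2"
  then have "ee = 1" using e_pos by simp
  then show False using ymod by simp
qed

end

theorem proposition1p12:
  fixes R :: "'a::field set" and v :: "'a \<Rightarrow> int" and x :: 'a
    and y p :: int
  assumes "standing R v"
    and "x \<in> nonunits R" and "x \<noteq> 0" and "v x = mult_e R v"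
    and "mlength R (setsum (conductor R v) (principal R x)) R = 2"
    and "y \<in> vals v R" and "0 < y" and "y < cond_c R v"
    and "y - mult_e R v \<notin> vals v R"
    and "cond_c R v - mult_e R v \<le> p * mult_e R v" and "p * mult_e R v < cond_c R v"
  shows "(mlength R R (colon R (nonunits R)) = enat (nat (mult_e R v - 1)) \<longleftrightarrow>
            2 * y \<ge> cond_c R v + mult_e R v
          \<or> (\<exists>q::int. q \<ge> 1 \<and> 2 * y = (2 * q + 1) * mult_e R v \<and> 2 * y < cond_c R v + mult_e R v
                \<and> p \<ge> 2 \<and> y \<in> vals v (colon (principal R x) (nonunits R))))
       \<and> (mlength R R (colon R (nonunits R)) = enat (nat (mult_e R v - 2)) \<longleftrightarrow>
            2 * y < cond_c R v + mult_e R v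
          \<and> (\<forall>q::int. 2 * y = (2 * q + 1) * mult_e R v \<longrightarrow> y \<notin> vals v (colon (principal R x) (nonunits R))))"
proof -
  interpret stdg R v by (rule stdg.intro) (rule assms(1))
  have cc: "cond_c R v = cc" and ee: "mult_e R v = ee" unfolding cc_def ee_def by simp_all
  interpret mn R v x y
    by (rule mn.intro, unfold_locales) (use assms in \<open>simp_all add: cc ee\<close>)
  let ?b = "y - ee \<in> vals v Q"
  have r: "mlength R R Q = enat (nat (ee - 2) + (if ?b then 1 else 0))" by (rule r_val)
  have e2: "ee \<ge> 2" by (rule e_ge2)
  have r1: "mlength R R Q = enat (nat (ee - 1)) \<longleftrightarrow> ?b" using r e2 by (cases ?b) (simp_all add: nat_diff_distrib)
  have r2: "mlength R R Q = enat (nat (ee - 2)) \<longleftrightarrow> \<not> ?b" using r by (cases ?b) simp_all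
  have pe: "p * ee \<ge> cc - ee" "p * ee < cc" using assms(10,11) cc ee by simp_all
  have key: "?b \<longleftrightarrow> 2 * y \<ge> cc + ee \<or> (\<exists>q::int. q \<ge> 1 \<and> 2 * y = (2 * q + 1) * ee \<and> 2 * y < cc + ee
                \<and> p \<ge> 2 \<and> y \<in> vals v (colon P m))"
  proof
    assume b: ?b
    show "2 * y \<ge> cc + ee \<or> (\<exists>q::int. q \<ge> 1 \<and> 2 * y = (2 * q + 1) * ee \<and> 2 * y < cc + ee
                \<and> p \<ge> 2 \<and> y \<in> vals v (colon P m))"
    proof (cases "2 * y \<ge> cc + ee")
      case True then show ?thesis by simp
    next
      case False
      then have lt: "2 * y < cc + ee" by simp
      obtain q where q: "q \<ge> 1" "2 * y = (2 * q + 1) * ee" using small2y[OF lt b] by blast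
      have "(2 * q + 1) * ee \<ge> 3 * ee" using q(1) e_pos by (simp add: mult_right_mono)
      then have "cc > 2 * ee" using q lt by simp
      then have "p * ee > ee" using pe by linarith
      then have "ee * 1 < ee * p" by (simp add: mult.commute)
      then have "1 < p" using e_pos by (simp only: mult_less_cancel_left_pos)
      then show ?thesis using q lt b colonP by auto
    qed
  next
    assume "2 * y \<ge> cc + ee \<or> (\<exists>q::int. q \<ge> 1 \<and> 2 * y = (2 * q + 1) * ee \<and> 2 * y < cc + ee
                \<and> p \<ge> 2 \<and> y \<in> vals v (colon P m))"
    then show ?b using big2y colonP by auto
  qed
  have key2: "\<not> ?b \<longleftrightarrow> 2 * y < cc + ee \<and> (\<forall>q::int. 2 * y = (2 * q + 1) * ee \<longrightarrow> y \<notin> vals v (colon P m))"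
  proof
    assume nb: "\<not> ?b"
    then have "\<not> 2 * y \<ge> cc + ee" using big2y by auto
    then show "2 * y < cc + ee \<and> (\<forall>q::int. 2 * y = (2 * q + 1) * ee \<longrightarrow> y \<notin> vals v (colon P m))"
      using nb colonP by auto
  next
    assume H: "2 * y < cc + ee \<and> (\<forall>q::int. 2 * y = (2 * q + 1) * ee \<longrightarrow> y \<notin> vals v (colon P m))"
    show "\<not> ?b"
    proof
      assume b: ?b
      obtain q where "q \<ge> 1" "2 * y = (2 * q + 1) * ee" using small2y b H by blast
      then show False using H b colonP by auto
    qed
  qed
  show ?thesis unfolding cc ee using r1 r2 key key2 by blast
qed


end
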